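(* Let $M$ be an ordinal monoid with merge and $A\subseteq M$. Then at least one of the following holds: (1) $a\cdot\mathrm{Cl}^{\mathrm{ord}+}_{\sharp}(A)\subsetneq\mathrm{Cl}^{\mathrm{ord}+}_{\sharp}(A)$ for some $a\in A$; (2) $\mathrm{Cl}^{\mathrm{ord}+}_{\sharp}(\mathrm{Cl}^{\omega}_{\sharp}(A))\subsetneq\mathrm{Cl}^{\mathrm{ord}+}_{\sharp}(A)$; (3) $x\cdot y=y$ and $x^\omega=y^\omega$ for all $x,y\in\mathrm{Cl}^{\mathrm{ord}+}_{\sharp}(A)$.
   Context: An ordinal monoid has generalised product $\pi$ on countable-ordinal-length words; $1=\pi(\varepsilon)$, $x\cdot y=\pi(xy)$, $x^\omega=\pi(xxx\cdots)$; ordered by $\le$ if $u\le v$ letterwise implies $\pi(u)\le\pi(v)$. $x^!$ idempotent power, $x^{!+k}$ eventual value of $x^{n!+k}$ in a finite semigroup. Ordinal monoid with merge: $(M,1,\le,\cdot,-^\omega,-^\sharp)$, $M$ finite, $(M,1,\le,\cdot,-^\omega)$ the presentation of an ordered finite ordinal monoid, $-^\sharp$ monotone with $a^{!+k}\le a^\sharp$, $(a^!)^\sharp=a^!$, $a^\sharp a^\sharp=(a^\sharp)^\sharp=a^\sharp$, $(ab)^\sharp=a(ba)^\sharp b$ for all $a,b\in M$, $k\in\mathbb Z$. Closures of $A\subseteq M$: $\mathrm{Cl}^{+}_{\sharp}(A)$ closure under $\cdot$ and $-^\sharp$; $\mathrm{Cl}^{\mathrm{ord}+}_{\sharp}(A)$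 closure under $\cdot$, $-^\sharp$ and $-^\omega$; $\mathrm{Cl}^{\omega}_{\sharp}(A)=\{a\cdot b^\omega:a,b\in\mathrm{Cl}^{+}_{\sharp}(A)\}$. $a\cdot X=\{a\cdot x: x\in X\}$. *)

theory Defs
  imports Main
begin

text \<open>A word of countable ordinal length over 'a is represented as a pair (r, w)
where r is a well-order on a subset of nat (its Field, the positions; every countable
ordinal is representable this way) and w assigns letters to positions (only values on
Field r matter).\<close>

type_synonym 'a oword = "nat rel \<times> (nat \<Rightarrow> 'a)"

definition ordinal_product :: "('a oword \<Rightarrow> 'a) \<Rightarrow> bool" where
  "ordinal_product \<pi> \<longleftrightarrow>
     \<comment> \<open>invariance under order isomorphism of positions\<close>
     (\<forall>r r' f w w'. Well_order r \<and> Well_order r' \<and> bij_betw f (Field r) (Field r') \<and>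
        (\<forall>i\<in>Field r. \<forall>j\<in>Field r. (i, j) \<in> r \<longleftrightarrow> (f i, f j) \<in> r') \<and>
        (\<forall>i\<in>Field r. w' (f i) = w i)
        \<longrightarrow> \<pi> (r, w) = \<pi> (r', w')) \<and>
     \<comment> \<open>one-letter words\<close>
     (\<forall>n w. \<pi> ({(n, n)}, w) = w n) \<and>
     \<comment> \<open>generalised associativity: cutting a word into (possibly empty) consecutive
        factors indexed by a countable ordinal R\<close>
     (\<forall>r R g w. Well_order r \<and> Well_order R \<and> (\<forall>i\<in>Field r. g i \<in> Field R) \<and>
        (\<forall>i\<in>Field r. \<forall>j\<in>Field r. (i, j) \<in> r \<longrightarrow> (g i, g j) \<in> R)
        \<longrightarrow> \<pi> (r, w) = \<pi> (R, \<lambda>k. \<pi> (Restr r {i \<in> Field r. g i = k}, w)))"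

definition ordered_ordinal_product :: "('a::order oword \<Rightarrow> 'a) \<Rightarrow> bool" where
  "ordered_ordinal_product \<pi> \<longleftrightarrow> ordinal_product \<pi> \<and>
     (\<forall>r w w'. Well_order r \<and> (\<forall>i\<in>Field r. w i \<le> w' i) \<longrightarrow> \<pi> (r, w) \<le> \<pi> (r, w'))"

definition presents ::
  "('a oword \<Rightarrow> 'a) \<Rightarrow> 'a \<Rightarrow> ('a \<Rightarrow> 'a \<Rightarrow> 'a) \<Rightarrow> ('a \<Rightarrow> 'a) \<Rightarrow> bool" where
  "presents \<pi> one mult omega \<longleftrightarrow>
     one = \<pi> ({}, \<lambda>_. undefined) \<and>
     (\<forall>x y. mult x y = \<pi> ({(0, 0), (0, 1), (1, 1)}, \<lambda>i. if i = 0 then x else y)) \<and>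
     (\<forall>x. omega x = \<pi> ({(i, j). i \<le> j}, \<lambda>_. x))"

fun mpow :: "'a \<Rightarrow> ('a \<Rightarrow> 'a \<Rightarrow> 'a) \<Rightarrow> 'a \<Rightarrow> nat \<Rightarrow> 'a" where
  "mpow one mult a 0 = one"
| "mpow one mult a (Suc n) = mult a (mpow one mult a n)"

definition idem_pow_plus :: "'a \<Rightarrow> ('a \<Rightarrow> 'a \<Rightarrow> 'a) \<Rightarrow> 'a \<Rightarrow> int \<Rightarrow> 'a" where
  "idem_pow_plus one mult a k =
     (THE y. \<exists>N. \<forall>n\<ge>N. mpow one mult a (nat (int (fact n) + k)) = y)"

definition idem_pow :: "'a \<Rightarrow> ('a \<Rightarrow> 'a \<Rightarrow> 'a) \<Rightarrow> 'a \<Rightarrow> 'a" where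
  "idem_pow one mult a = idem_pow_plus one mult a 0"

definition ordinal_monoid_with_merge ::
  "'a::{finite,order} \<Rightarrow> ('a \<Rightarrow> 'a \<Rightarrow> 'a) \<Rightarrow> ('a \<Rightarrow> 'a) \<Rightarrow> ('a \<Rightarrow> 'a) \<Rightarrow> bool" where
  "ordinal_monoid_with_merge one mult omega sharp \<longleftrightarrow>
     (\<exists>\<pi>. ordered_ordinal_product \<pi> \<and> presents \<pi> one mult omega) \<and>
     mono sharp \<and>
     (\<forall>a k. idem_pow_plus one mult a k \<le> sharp a) \<and>
     (\<forall>a. sharp (idem_pow one mult a) = idem_pow one mult a) \<and>
     (\<forall>a. mult (sharp a) (sharp a) = sharp a) \<and>
     (\<forall>a. sharp (sharp a) = sharp a) \<and>
     (\<forall>a b. sharp (mult a b) = mult a (mult (sharp (mult b a)) b))"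

inductive_set cl_plus_sharp :: "('a \<Rightarrow> 'a \<Rightarrow> 'a) \<Rightarrow> ('a \<Rightarrow> 'a) \<Rightarrow> 'a set \<Rightarrow> 'a set"
  for mult sharp A where
  base: "a \<in> A \<Longrightarrow> a \<in> cl_plus_sharp mult sharp A"
| mult: "a \<in> cl_plus_sharp mult sharp A \<Longrightarrow> b \<in> cl_plus_sharp mult sharp A \<Longrightarrow>
         mult a b \<in> cl_plus_sharp mult sharp A"
| sharp: "a \<in> cl_plus_sharp mult sharp A \<Longrightarrow> sharp a \<in> cl_plus_sharp mult sharp A"

inductive_set cl_ord_plus_sharp ::
  "('a \<Rightarrow> 'a \<Rightarrow> 'a) \<Rightarrow> ('a \<Rightarrow> 'a) \<Rightarrow> ('a \<Rightarrow> 'a) \<Rightarrow> 'a set \<Rightarrow> 'a set"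
  for mult omega sharp A where
  base: "a \<in> A \<Longrightarrow> a \<in> cl_ord_plus_sharp mult omega sharp A"
| mult: "a \<in> cl_ord_plus_sharp mult omega sharp A \<Longrightarrow> b \<in> cl_ord_plus_sharp mult omega sharp A \<Longrightarrow>
         mult a b \<in> cl_ord_plus_sharp mult omega sharp A"
| sharp: "a \<in> cl_ord_plus_sharp mult omega sharp A \<Longrightarrow> sharp a \<in> cl_ord_plus_sharp mult omega sharp A"
| omega: "a \<in> cl_ord_plus_sharp mult omega sharp A \<Longrightarrow> omega a \<in> cl_ord_plus_sharp mult omega sharp A"

definition cl_omega_sharp ::
  "('a \<Rightarrow> 'a \<Rightarrow> 'a) \<Rightarrow> ('a \<Rightarrow> 'a) \<Rightarrow> ('a \<Rightarrow> 'a) \<Rightarrow> 'a set \<Rightarrow> 'a set" where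
  "cl_omega_sharp mult omega sharp A =
     {mult a (omega b) | a b. a \<in> cl_plus_sharp mult sharp A \<and> b \<in> cl_plus_sharp mult sharp A}"

end

theory Submission
  imports Defs
begin


definition NL :: "nat set \<Rightarrow> nat rel" where "NL S = Restr natLeq S"

lemma WO_NL: "Well_order (NL S)"
  unfolding NL_def by (rule Well_order_Restr[OF natLeq_Well_order])

lemma mem_NL: "(i,j) \<in> NL S \<longleftrightarrow> i \<in> S \<and> j \<in> S \<and> i \<le> j"
  unfolding NL_def natLeq_def by auto

lemma Field_NL: "Field (NL S) = S"
  unfolding Field_def by (auto simp: mem_NL)

lemma WO_NL': "well_order_on S (NL S)"
  using WO_NL[of S] by (simp add: Field_NL)

lemma div_block: "0 < (k::nat) \<Longrightarrow> {i. i div k = j} = {j*k..<j*k+k}"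
proof (intro set_eqI iffI)
  fix i assume k: "0 < k"
  { assume "i \<in> {i. i div k = j}"
    then have "i div k = j" by simp
    moreover have "i div k * k + i mod k = i" by (rule div_mult_mod_eq)
    moreover have "i mod k < k" using k by simp
    ultimately show "i \<in> {j*k..<j*k+k}" by auto }
  { assume "i \<in> {j*k..<j*k+k}"
    then have "i div k = j" by (intro div_nat_eqI) (auto simp: mult.commute)
    then show "i \<in> {i. i div k = j}" by simp }
qed

lemma NL_empty: "NL {} = {}" by (auto simp: NL_def)
lemma NL_single: "NL {a} = {(a,a)}" by (auto simp: mem_NL)

locale opres =
  fixes pi :: "'a oword \<Rightarrow> 'a" and one :: 'a and mult :: "'a \<Rightarrow> 'a \<Rightarrow> 'a" and omega :: "'a \<Rightarrow> 'a"
  assumes op: "ordinal_product pi" and pr: "presents pi one mult omega"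
begin

lemma inv: "Well_order r \<Longrightarrow> Well_order r' \<Longrightarrow> bij_betw f (Field r) (Field r') \<Longrightarrow>
   (\<forall>i\<in>Field r. \<forall>j\<in>Field r. (i,j)\<in>r \<longleftrightarrow> (f i, f j) \<in> r') \<Longrightarrow> (\<forall>i\<in>Field r. w' (f i) = w i)
   \<Longrightarrow> pi (r,w) = pi (r',w')"
  using op unfolding ordinal_product_def by blast

lemma single: "pi ({(n,n)}, w) = w n"
  using op unfolding ordinal_product_def by blast

lemma assoc_ax: "Well_order r \<Longrightarrow> Well_order R \<Longrightarrow> (\<forall>i\<in>Field r. g i \<in> Field R) \<Longrightarrow>
   (\<forall>i\<in>Field r. \<forall>j\<in>Field r. (i,j)\<in>r \<longrightarrow> (g i, g j) \<in> R) \<Longrightarrow>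
   pi (r,w) = pi (R, \<lambda>k. pi (Restr r {i\<in>Field r. g i = k}, w))"
  using op unfolding ordinal_product_def by blast

lemma cong: "Well_order r \<Longrightarrow> (\<forall>i\<in>Field r. w i = w' i) \<Longrightarrow> pi (r,w) = pi (r,w')"
  by (rule inv[where f=id]) auto

lemma NL_cong: "(\<forall>i\<in>S. w i = w' i) \<Longrightarrow> pi (NL S,w) = pi (NL S,w')"
  by (rule cong) (auto simp: WO_NL WO_NL' Field_NL)

lemma assoc_NL: "g ` S \<subseteq> T \<Longrightarrow> (\<forall>i\<in>S. \<forall>j\<in>S. i \<le> j \<longrightarrow> g i \<le> g j) \<Longrightarrow>
   pi (NL S, w) = pi (NL T, \<lambda>k. pi (NL {i\<in>S. g i = k}, w))"
proof -
  assume a: "g ` S \<subseteq> T" "\<forall>i\<in>S. \<forall>j\<in>S. i \<le> j \<longrightarrow> g i \<le> g j"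
  have "pi (NL S, w) = pi (NL T, \<lambda>k. pi (Restr (NL S) {i\<in>Field (NL S). g i = k}, w))"
    by (rule assoc_ax) (use a in \<open>auto simp: WO_NL WO_NL' Field_NL mem_NL\<close>)
  moreover have "Restr (NL S) {i\<in>Field (NL S). g i = k} = NL {i\<in>S. g i = k}" for k
    by (auto simp: Field_NL mem_NL)
  ultimately show ?thesis by simp
qed

lemma one_eq: "pi ({}, w) = one"
proof -
  have "pi (NL {}, w) = pi (NL {}, \<lambda>_. undefined)" by (rule NL_cong) auto
  then show ?thesis using pr unfolding presents_def by (simp add: NL_empty)
qed

lemma mult_eq: "mult x y = pi (NL {0..<2}, \<lambda>i. if i = 0 then x else y)"
proof -
  have "{(0,0),(0,1),(1,1)} = NL {0..<2::nat}"
    by (auto simp: mem_NL)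
  then show ?thesis using pr unfolding presents_def by metis
qed

lemma omega_eq: "omega x = pi (NL UNIV, \<lambda>_. x)"
proof -
  have "{(i,j). i \<le> j} = NL (UNIV::nat set)"
    by (auto simp: mem_NL)
  then show ?thesis using pr unfolding presents_def by metis
qed

lemma cut: "S1 \<subseteq> S \<Longrightarrow> (\<forall>i\<in>S1. \<forall>j\<in>S - S1. i < j) \<Longrightarrow>
   pi (NL S, w) = mult (pi (NL S1, w)) (pi (NL (S - S1), w))"
proof -
  assume a: "S1 \<subseteq> S" "\<forall>i\<in>S1. \<forall>j\<in>S - S1. i < j"
  let ?g = "\<lambda>i. if i \<in> S1 then 0 else (1::nat)"
  have "pi (NL S, w) = pi (NL {0..<2}, \<lambda>k. pi (NL {i\<in>S. ?g i = k}, w))"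
  proof (rule assoc_NL)
    show "?g ` S \<subseteq> {0..<2}" by auto
    show "\<forall>i\<in>S. \<forall>j\<in>S. i \<le> j \<longrightarrow> ?g i \<le> ?g j"
      using a by (auto) (meson DiffI leD)
  qed
  also have "\<dots> = pi (NL {0..<2}, \<lambda>k. if k = 0 then pi (NL S1, w) else pi (NL (S - S1), w))"
  proof (rule NL_cong, intro ballI)
    fix k :: nat assume "k \<in> {0..<2}"
    then have s: "{i\<in>S. ?g i = k} = (if k = 0 then S1 else S - S1)" using a by auto
    show "pi (NL {i\<in>S. ?g i = k}, w) = (if k = 0 then pi (NL S1, w) else pi (NL (S - S1), w))"
      unfolding s by simp
  qed
  finally show ?thesis by (simp add: mult_eq)
qed

lemma pi_single: "pi (NL {a}, w) = w a"
  by (simp add: NL_single single)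

lemma lid: "mult one x = x"
proof -
  have "pi (NL {0}, \<lambda>_. x) = mult (pi (NL {}, \<lambda>_. x)) (pi (NL ({0} - {}), \<lambda>_. x))"
    by (rule cut) auto
  then show ?thesis by (simp add: pi_single NL_empty one_eq)
qed

lemma rid: "mult x one = x"
proof -
  have "pi (NL {0}, \<lambda>_. x) = mult (pi (NL {0}, \<lambda>_. x)) (pi (NL ({0} - {0}), \<lambda>_. x))"
    by (rule cut) auto
  then show ?thesis by (simp add: pi_single NL_empty one_eq)
qed

lemma assoc: "mult (mult x y) z = mult x (mult y z)"
proof -
  define w where "w = (\<lambda>i::nat. if i = 0 then x else if i = 1 then y else z)"
  have h1: "pi (NL {0,1,2}, w) = mult (pi (NL {0}, w)) (pi (NL ({0,1,2} - {0}), w))"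
    by (rule cut) auto
  have h2: "pi (NL ({0,1,2} - {0}), w) = mult (pi (NL {1}, w)) (pi (NL ({0,1,2} - {0} - {1}), w))"
    by (rule cut) auto
  have h3: "pi (NL {0,1,2}, w) = mult (pi (NL {0,1}, w)) (pi (NL ({0,1,2} - {0,1}), w))"
    by (rule cut) auto
  have h4: "pi (NL {0,1}, w) = mult (pi (NL {0}, w)) (pi (NL ({0,1} - {0}), w))"
    by (rule cut) auto
  have e1: "{0,1,2::nat} - {0} - {1} = {2}" "{0,1,2::nat} - {0,1} = {2}" "{0,1::nat} - {0} = {1}" by auto
  show ?thesis using h1 h2 h3 h4 by (simp add: e1 pi_single w_def)
qed

lemma block: "pi (NL {a..<a+k}, \<lambda>_. x) = mpow one mult x k"
proof (induction k arbitrary: a)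
  case 0 then show ?case by (simp add: NL_empty one_eq)
next
  case (Suc k)
  have "pi (NL {a..<a+Suc k}, \<lambda>_. x) = mult (pi (NL {a}, \<lambda>_. x)) (pi (NL ({a..<a+Suc k} - {a}), \<lambda>_. x))"
    by (rule cut) auto
  moreover have "{a..<a+Suc k} - {a} = {Suc a..<Suc a + k}" by auto
  ultimately show ?case using Suc.IH[of "Suc a"] by (simp add: pi_single)
qed

lemma shift: "pi (NL UNIV, \<lambda>i. w (i + a)) = pi (NL {a..}, w)"
proof (rule inv[where f = "\<lambda>i. i + a"])
  show "Well_order (NL UNIV)" "Well_order (NL {a..})" by (rule WO_NL)+
  show "bij_betw (\<lambda>i. i + a) (Field (NL UNIV)) (Field (NL {a..}))"
    unfolding Field_NL bij_betw_def
  proof (intro conjI)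
    show "inj_on (\<lambda>i. i + a) UNIV" by (auto simp: inj_on_def)
    have "x \<in> range (\<lambda>i. i + a)" if "a \<le> x" for x
      using that by (intro image_eqI[where x="x-a"]) auto
    then show "range (\<lambda>i. i + a) = {a..}" by auto
  qed
qed (auto simp: Field_NL mem_NL)

lemma om1: "mult x (omega x) = omega x"
proof -
  have "pi (NL UNIV, \<lambda>_. x) = mult (pi (NL {0}, \<lambda>_. x)) (pi (NL (UNIV - {0}), \<lambda>_. x))"
    by (rule cut) auto
  moreover have "UNIV - {0::nat} = {1..}" by auto
  moreover have "pi (NL {1..}, \<lambda>_. x) = pi (NL UNIV, \<lambda>_. x)" using shift[of "\<lambda>_. x" 1] by simp
  ultimately show ?thesis by (simp add: omega_eq pi_single)
qed

lemma om3: "0 < k \<Longrightarrow> omega (mpow one mult x k) = omega x"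
proof -
  assume k: "0 < k"
  have "pi (NL UNIV, \<lambda>_. x) = pi (NL UNIV, \<lambda>j. pi (NL {i\<in>UNIV. i div k = j}, \<lambda>_. x))"
    by (rule assoc_NL) (auto simp: div_le_mono)
  also have "\<dots> = pi (NL UNIV, \<lambda>j. mpow one mult x k)"
  proof (rule NL_cong, intro ballI)
    fix j
    have "{i\<in>UNIV. i div k = j} = {j*k..<j*k+k}"
      using div_block[OF k] by simp
    then show "pi (NL {i\<in>UNIV. i div k = j}, \<lambda>_. x) = mpow one mult x k" by (simp add: block)
  qed
  finally show ?thesis by (simp add: omega_eq)
qed

lemma alt: "pi (NL UNIV, \<lambda>i. if even i then a else b) = omega (mult a b)"
proof -
  let ?w = "\<lambda>i::nat. if even i then a else b"
  have "pi (NL UNIV, ?w) = pi (NL UNIV, \<lambda>j. pi (NL {i\<in>UNIV. i div 2 = j}, ?w))"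
    by (rule assoc_NL) (auto simp: div_le_mono)
  also have "\<dots> = pi (NL UNIV, \<lambda>j. mult a b)"
  proof (rule NL_cong, intro ballI)
    fix j
    have e: "{i\<in>UNIV. i div 2 = j} = {2*j, Suc (2*j)}" by auto
    have "pi (NL {2*j, Suc (2*j)}, ?w) = mult (pi (NL {2*j}, ?w)) (pi (NL ({2*j, Suc (2*j)} - {2*j}), ?w))"
      by (rule cut) auto
    moreover have "{2*j, Suc (2*j)} - {2*j} = {Suc (2*j)}" by auto
    ultimately have "pi (NL {2*j, Suc (2*j)}, ?w) = mult a b" by (simp add: pi_single)
    then show "pi (NL {i\<in>UNIV. i div 2 = j}, ?w) = mult a b" by (simp only: e)
  qed
  finally show ?thesis by (simp add: omega_eq)
qed

lemma om2: "omega (mult x y) = mult x (omega (mult y x))"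
proof -
  let ?w = "\<lambda>i::nat. if even i then x else y"
  have "pi (NL UNIV, ?w) = mult (pi (NL {0}, ?w)) (pi (NL (UNIV - {0}), ?w))"
    by (rule cut) auto
  moreover have "UNIV - {0::nat} = {1..}" by auto
  moreover have "pi (NL {1..}, ?w) = pi (NL UNIV, \<lambda>i. if even i then y else x)"
  proof -
    have f: "(\<lambda>i. ?w (i+1)) = (\<lambda>i. if even i then y else x)" by auto
    show ?thesis using shift[of ?w 1] f by (metis One_nat_def)
  qed
  ultimately show ?thesis using alt[of x y] alt[of y x] by (simp add: pi_single)
qed

end



locale alg =
  fixes one :: "'a::finite" and mult :: "'a \<Rightarrow> 'a \<Rightarrow> 'a" and omega sharp :: "'a \<Rightarrow> 'a"
  assumes assoc: "mult (mult x y) z = mult x (mult y z)"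
  and lid: "mult one x = x"
  and rid: "mult x one = x"
  and om1: "mult x (omega x) = omega x"
  and om2: "omega (mult x y) = mult x (omega (mult y x))"
  and om3: "0 < k \<Longrightarrow> omega (mpow one mult x k) = omega x"
  and sh1: "mult (sharp x) (sharp x) = sharp x"
  and sh2: "mult x x = x \<Longrightarrow> sharp x = x"
  and sh3: "mult x (sharp x) = sharp x"
begin

lemma mpow_add: "mpow one mult x (m + n) = mult (mpow one mult x m) (mpow one mult x n)"
  by (induction m) (auto simp: lid assoc)

context
  fixes C :: "'a set"
  assumes Cm0: "\<forall>x\<in>C. \<forall>y\<in>C. mult x y \<in> C"
begin

lemma Cm: "x \<in> C \<Longrightarrow> y \<in> C \<Longrightarrow> mult x y \<in> C" using Cm0 by blast

lemma finC: "finite C" by simp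

lemma surj: "x \<in> C \<Longrightarrow> inj_on (mult x) C \<Longrightarrow> mult x ` C = C"
  by (rule endo_inj_surj) (auto intro: Cm)

lemma L_mult_P:
  assumes "x \<in> C" "y \<in> C" "inj_on (mult (mult x y)) C"
  shows "inj_on (mult y) C \<and> inj_on (mult x) C"
proof
  show "inj_on (mult y) C"
  proof (rule inj_onI)
    fix u v assume "u \<in> C" "v \<in> C" "mult y u = mult y v"
    then have "mult (mult x y) u = mult (mult x y) v" by (simp add: assoc)
    then show "u = v" using assms(3) \<open>u \<in> C\<close> \<open>v \<in> C\<close> by (auto dest: inj_onD)
  qed
  have "C = mult (mult x y) ` C" using surj[of "mult x y"] assms Cm by auto
  also have "\<dots> \<subseteq> mult x ` C"
    using assms(2) by (auto simp: assoc intro: Cm)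
  finally show "inj_on (mult x) C" by (rule finite_surj_inj[OF finC])
qed

lemma L_fix:
  assumes "z \<in> C" "inj_on (mult z) C" "mult y z = z"
  shows "\<forall>u\<in>C. mult y u = u"
proof
  fix u assume "u \<in> C"
  then obtain v where "v \<in> C" "u = mult z v" using surj[OF assms(1,2)] by blast
  then show "mult y u = u" using assms(3) by (simp flip: assoc)
qed

lemma L_common:
  assumes "p \<in> C" "q \<in> C" "\<forall>u\<in>C. mult p u = u" "\<forall>u\<in>C. mult q u = u"
  shows "omega p = omega q"
proof -
  have "omega (mult p q) = mult p (omega (mult q p))" by (rule om2)
  then have "omega q = mult p (omega p)" using assms by simp
  then show ?thesis by (simp add: om1)
qed

lemma mpow_C: "x \<in> C \<Longrightarrow> 0 < i \<Longrightarrow> mpow one mult x i \<in> C"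
proof (induction i)
  case 0 then show ?case by simp
next
  case (Suc i)
  show ?case
  proof (cases i)
    case 0 then show ?thesis using Suc.prems by (simp add: rid)
  next
    case (Suc n)
    then have "mpow one mult x i \<in> C" using Suc.IH Suc.prems by simp
    then show ?thesis using Cm Suc.prems by simp
  qed
qed

lemma mpow_inj: "x \<in> C \<Longrightarrow> inj_on (mult x) C \<Longrightarrow> inj_on (mult (mpow one mult x i)) C"
proof (induction i)
  case 0 then show ?case by (simp add: lid)
next
  case (Suc i)
  show ?case
  proof (rule inj_onI)
    fix u v assume uv: "u \<in> C" "v \<in> C" "mult (mpow one mult x (Suc i)) u = mult (mpow one mult x (Suc i)) v"
    then have "mult x (mult (mpow one mult x i) u) = mult x (mult (mpow one mult x i) v)" by (simp add: assoc)
    moreover have "mult (mpow one mult x i) u \<in> C" "mult (mpow one mult x i) v \<in> C"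
    proof -
      have "mult (mpow one mult x i) y \<in> C" if "y \<in> C" for y
      proof (cases "i = 0")
        case True then show ?thesis using that by (simp add: lid)
      next
        case False then show ?thesis using that Cm mpow_C Suc.prems by simp
      qed
      then show "mult (mpow one mult x i) u \<in> C" "mult (mpow one mult x i) v \<in> C" using uv by auto
    qed
    ultimately have "mult (mpow one mult x i) u = mult (mpow one mult x i) v"
      using Suc.prems by (auto dest: inj_onD)
    then show "u = v" using Suc uv by (auto dest: inj_onD)
  qed
qed

lemma L_pow:
  assumes "x \<in> C" "inj_on (mult x) C"
  shows "\<exists>q. q \<in> C \<and> (\<forall>u\<in>C. mult q u = u) \<and> omega q = omega x"
proof -
  have "\<not> inj (\<lambda>i::nat. mpow one mult x i)"
  proof
    assume "inj (\<lambda>i::nat. mpow one mult x i)"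
    then show False using finite_imageD[of "\<lambda>i::nat. mpow one mult x i" UNIV] by simp
  qed
  then obtain i0 j0 :: nat where ij0: "i0 \<noteq> j0" "mpow one mult x i0 = mpow one mult x j0"
    unfolding inj_def by blast
  obtain i j :: nat where ij: "i < j" "mpow one mult x i = mpow one mult x j"
    using ij0 by (metis linorder_neqE_nat)
  define q where "q = mpow one mult x (j - i)"
  have qC: "q \<in> C" unfolding q_def using ij assms by (intro mpow_C) auto
  have jeq: "mpow one mult x j = mult (mpow one mult x i) q"
    unfolding q_def using mpow_add[where m=i and n="j - i"] ij by simp
  have "\<forall>u\<in>C. mult q u = u"
  proof
    fix u assume u: "u \<in> C"
    have "mult (mpow one mult x i) (mult q u) = mult (mpow one mult x i) u"
      using ij jeq by (simp flip: assoc)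
    moreover have "mult q u \<in> C" using qC u by (rule Cm)
    ultimately show "mult q u = u" using mpow_inj[OF assms, of i] u by (auto dest: inj_onD)
  qed
  moreover have "omega q = omega x" unfolding q_def using ij by (intro om3) auto
  ultimately show ?thesis using qC by blast
qed

end

lemma cl_empty: "x \<in> cl_ord_plus_sharp mult omega sharp {} \<Longrightarrow> False"
  by (induction rule: cl_ord_plus_sharp.induct) auto

theorem main:
  "(\<exists>a\<in>A. mult a ` cl_ord_plus_sharp mult omega sharp A \<subset> cl_ord_plus_sharp mult omega sharp A)
       \<or> cl_ord_plus_sharp mult omega sharp (cl_omega_sharp mult omega sharp A)
           \<subset> cl_ord_plus_sharp mult omega sharp A
       \<or> (\<forall>x\<in>cl_ord_plus_sharp mult omega sharp A. \<forall>y\<in>cl_ord_plus_sharp mult omega sharp A.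
            mult x y = y \<and> omega x = omega y)"
proof -
  define C where "C = cl_ord_plus_sharp mult omega sharp A"
  define U where "U = cl_omega_sharp mult omega sharp A"
  define Cp where "Cp = cl_plus_sharp mult sharp A"
  have Cm: "\<And>x y. x \<in> C \<Longrightarrow> y \<in> C \<Longrightarrow> mult x y \<in> C"
    unfolding C_def by (rule cl_ord_plus_sharp.mult)
  have Cs: "\<And>x. x \<in> C \<Longrightarrow> sharp x \<in> C" unfolding C_def by (rule cl_ord_plus_sharp.sharp)
  have Co: "\<And>x. x \<in> C \<Longrightarrow> omega x \<in> C" unfolding C_def by (rule cl_ord_plus_sharp.omega)
  have CpC: "x \<in> C" if "x \<in> Cp" for x
    using that unfolding Cp_def
    by (induction rule: cl_plus_sharp.induct) (auto simp: C_def intro: cl_ord_plus_sharp.intros)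
  have UC: "x \<in> C" if "x \<in> U" for x
    using that unfolding U_def cl_omega_sharp_def Cp_def[symmetric] by (auto intro: Cm Co CpC)
  have ClUC: "x \<in> C" if "x \<in> cl_ord_plus_sharp mult omega sharp U" for x
    using that by (induction rule: cl_ord_plus_sharp.induct) (auto intro: Cm Cs Co UC)
  show ?thesis
  proof (cases "A = {}")
    case True
    then show ?thesis using cl_empty by blast
  next
    case False
    then obtain a0 where a0: "a0 \<in> A" by blast
    show ?thesis
    proof (rule ccontr)
      assume H: "\<not> ?thesis"
      have not1: "\<forall>a\<in>A. \<not> mult a ` C \<subset> C" using H unfolding C_def by blast
      have not2: "\<not> cl_ord_plus_sharp mult omega sharp U \<subset> C" using H unfolding C_def U_def by blast
      have eqU: "cl_ord_plus_sharp mult omega sharp U = C" using not2 ClUC by blast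
      have AC: "a \<in> C" if "a \<in> A" for a using that unfolding C_def by (rule cl_ord_plus_sharp.base)
      have AP: "inj_on (mult a) C" if "a \<in> A" for a
      proof -
        have "mult a ` C \<subseteq> C" using AC[OF that] by (auto intro: Cm)
        then have "mult a ` C = C" using not1 that by blast
        then show ?thesis by (intro finite_surj_inj) auto
      qed
      have Cm0: "\<forall>x\<in>C. \<forall>y\<in>C. mult x y \<in> C" using Cm by blast
      note L = surj[OF Cm0] L_mult_P[OF Cm0] L_fix[OF Cm0] L_common[OF Cm0] L_pow[OF Cm0]
      have D: "z \<in> C \<longrightarrow> inj_on (mult z) C \<longrightarrow> (\<forall>u\<in>C. mult z u = u)"
        if "z \<in> cl_ord_plus_sharp mult omega sharp U" for z
        using that
      proof (induction rule: cl_ord_plus_sharp.induct)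
        case (base z)
        then obtain c d where cd: "z = mult c (omega d)" "c \<in> Cp" "d \<in> Cp"
          unfolding U_def cl_omega_sharp_def Cp_def by blast
        define w where "w = omega d"
        have cC: "c \<in> C" and dC: "d \<in> C" and wC: "w \<in> C" using cd CpC Co unfolding w_def by auto
        show ?case
        proof (intro impI)
          assume zi: "inj_on (mult z) C"
          have wi: "inj_on (mult w) C" and ci: "inj_on (mult c) C"
            using L(2)[OF cC wC] zi cd unfolding w_def by auto
          have dN: "\<forall>u\<in>C. mult d u = u" using L(3)[OF wC wi] om1 unfolding w_def by blast
          obtain q where q: "q \<in> C" "\<forall>u\<in>C. mult q u = u" "omega q = omega c" using L(5)[OF cC ci] by blast
          have "omega c = w" using L(4)[OF q(1) dC q(2) dN] q(3) unfolding w_def by simp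
          then have zw: "z = w" using cd om1[of c] unfolding w_def by simp
          obtain q' where q': "q' \<in> C" "\<forall>u\<in>C. mult q' u = u" "omega q' = omega w" using L(5)[OF wC wi] by blast
          have "omega w = w" using L(4)[OF q'(1) dC q'(2) dN] q'(3) unfolding w_def by simp
          then have "mult w w = w" using om1[of w] by simp
          then show "\<forall>u\<in>C. mult z u = u" using L(3)[OF wC wi] zw by blast
        qed
      next
        case (mult y1 y2)
        show ?case
        proof (intro impI)
          assume "inj_on (mult (mult y1 y2)) C"
          moreover have "y1 \<in> C" "y2 \<in> C" using ClUC mult.hyps by auto
          ultimately have "inj_on (mult y2) C \<and> inj_on (mult y1) C" using L(2) by blast
          then show "\<forall>u\<in>C. mult (mult y1 y2) u = u" using mult \<open>y1 \<in> C\<close> \<open>y2 \<in> C\<close> by (simp add: assoc)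
        qed
      next
        case (sharp y)
        have yU: "y \<in> cl_ord_plus_sharp mult omega sharp U" by fact
        have zC: "sharp y \<in> C" using Cs[OF ClUC[OF yU]] .
        show ?case using L(3)[OF zC _ sh1] by blast
      next
        case (omega y)
        have yU: "y \<in> cl_ord_plus_sharp mult omega sharp U" by fact
        have yC: "y \<in> C" using ClUC[OF yU] .
        have zC: "omega y \<in> C" using Co[OF yC] .
        show ?case
        proof (intro impI)
          assume zi: "inj_on (mult (omega y)) C"
          have yN: "\<forall>u\<in>C. mult y u = u" using L(3)[OF zC zi] om1 by blast
          obtain q where q: "q \<in> C" "\<forall>u\<in>C. mult q u = u" "omega q = omega (omega y)" using L(5)[OF zC zi] by blast
          have "omega (omega y) = omega y" using L(4)[OF q(1) yC q(2) yN] q(3) by simp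
          then have "mult (omega y) (omega y) = omega y" using om1[of "omega y"] by simp
          then show "\<forall>u\<in>C. mult (omega y) u = u" using L(3)[OF zC zi] by blast
        qed
      qed
      have E: "inj_on (mult z) C \<longrightarrow> (\<exists>u\<in>U. inj_on (mult u) C)"
        if "z \<in> cl_ord_plus_sharp mult omega sharp U" for z
        using that
      proof (induction rule: cl_ord_plus_sharp.induct)
        case (base z) then show ?case by blast
      next
        case (mult y1 y2)
        have "y1 \<in> C" "y2 \<in> C" using ClUC mult.hyps by auto
        then show ?case using mult L(2) by blast
      next
        case (sharp y)
        have yU: "y \<in> cl_ord_plus_sharp mult omega sharp U" by fact
        have yC: "y \<in> C" using ClUC[OF yU] .
        have zC: "sharp y \<in> C" using Cs[OF yC] .
        show ?case
        proof
          assume zi: "inj_on (mult (sharp y)) C"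
          have "\<forall>u\<in>C. mult y u = u" using L(3)[OF zC zi] sh3 by blast
          then have "inj_on (mult y) C" by (simp add: inj_on_def)
          then show "\<exists>u\<in>U. inj_on (mult u) C" using sharp by blast
        qed
      next
        case (omega y)
        have yU: "y \<in> cl_ord_plus_sharp mult omega sharp U" by fact
        have yC: "y \<in> C" using ClUC[OF yU] .
        have zC: "omega y \<in> C" using Co[OF yC] .
        show ?case
        proof
          assume zi: "inj_on (mult (omega y)) C"
          have "\<forall>u\<in>C. mult y u = u" using L(3)[OF zC zi] om1 by blast
          then have "inj_on (mult y) C" by (simp add: inj_on_def)
          then show "\<exists>u\<in>U. inj_on (mult u) C" using omega by blast
        qed
      qed
      have AN: "\<forall>u\<in>C. mult a u = u" if "a \<in> A" for a
        using D[of a] AC[OF that] AP[OF that] eqU by blast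
      have CpN: "x \<in> C \<and> (\<forall>u\<in>C. mult x u = u)" if "x \<in> Cp" for x
        using that unfolding Cp_def
      proof (induction rule: cl_plus_sharp.induct)
        case (base a) then show ?case using AC AN by blast
      next
        case (mult a b) then show ?case by (auto intro: Cm simp: assoc)
      next
        case (sharp a)
        then have "mult a a = a" by blast
        then show ?case using sharp sh2 by simp
      qed
      define e where "e = omega a0"
      have a0C: "a0 \<in> C" using AC a0 by blast
      have a0N: "\<forall>u\<in>C. mult a0 u = u" using AN a0 by blast
      have Ue: "u = e" if uU: "u \<in> U" for u
      proof -
        obtain c d where cd: "u = mult c (omega d)" "c \<in> Cp" "d \<in> Cp"
          using uU unfolding U_def cl_omega_sharp_def Cp_def by blast
        have "omega d = e" "omega c = e" using L(4) CpN cd a0C a0N unfolding e_def by metis+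
        then show ?thesis using cd om1[of c] by simp
      qed
      have eC: "e \<in> C" using Co a0C unfolding e_def by blast
      have "\<exists>u\<in>U. inj_on (mult u) C" using E[of a0] eqU a0C AP a0 by blast
      then have ei: "inj_on (mult e) C" using Ue by blast
      have eU: "e \<in> cl_ord_plus_sharp mult omega sharp U" using eqU eC by blast
      have eN: "\<forall>u\<in>C. mult e u = u" using D[OF eU] eC ei by blast
      have omN: "omega x = e" if "x \<in> C" "\<forall>u\<in>C. mult x u = u" for x
        using L(4)[OF that(1) a0C that(2) a0N] unfolding e_def .
      have allN: "x \<in> C \<and> (\<forall>u\<in>C. mult x u = u)" if "x \<in> cl_ord_plus_sharp mult omega sharp U" for x
        using that
      proof (induction rule: cl_ord_plus_sharp.induct)
        case (base a) then show ?case using Ue eC eN by blast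
      next
        case (mult a b) then show ?case by (auto intro: Cm simp: assoc)
      next
        case (sharp a)
        then have "mult a a = a" by blast
        then show ?case using sharp sh2 by simp
      next
        case (omega a) then show ?case using omN eC eN by simp
      qed
      have "\<forall>x\<in>C. \<forall>y\<in>C. mult x y = y \<and> omega x = omega y"
        using allN eqU omN by blast
      then show False using H unfolding C_def by blast
    qed
  qed
qed

end


lemma idem_mpow:
  assumes rid: "\<And>y. mult y one = y" and xx: "mult x x = x"
  shows "mpow one mult x (Suc n) = x"
  by (induction n) (simp_all add: rid xx)

lemma idem_pow_idem:
  assumes rid: "\<And>y. mult y one = y" and xx: "mult x x = x"
  shows "idem_pow one mult x = x"
  unfolding idem_pow_def idem_pow_plus_def
proof (rule the_equality)
  have "mpow one mult x (nat (int (fact n) + 0)) = x" for n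
  proof -
    have "fact n > (0::nat)" by simp
    then obtain m where "nat (int (fact n) + 0) = Suc m" by (metis gr0_implies_Suc nat_int add_0_right)
    then show ?thesis using idem_mpow[OF rid xx] by simp
  qed
  then show "\<exists>N. \<forall>n\<ge>N. mpow one mult x (nat (int (fact n) + 0)) = x" by blast
next
  fix y assume "\<exists>N. \<forall>n\<ge>N. mpow one mult x (nat (int (fact n) + 0)) = y"
  then obtain N where "\<forall>n\<ge>N. mpow one mult x (nat (int (fact n) + 0)) = y" by blast
  then have "mpow one mult x (nat (int (fact N) + 0)) = y" by blast
  moreover have "fact N > (0::nat)" by simp
  then obtain m where "nat (int (fact N) + 0) = Suc m" by (metis gr0_implies_Suc nat_int add_0_right)
  ultimately show "y = x" using idem_mpow[OF rid xx] by simp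
qed

theorem lemma5p10:
  fixes one :: "'a::{finite,order}"
    and mult :: "'a \<Rightarrow> 'a \<Rightarrow> 'a"
    and omega sharp :: "'a \<Rightarrow> 'a"
    and A :: "'a set"
  assumes "ordinal_monoid_with_merge one mult omega sharp"
  shows "(\<exists>a\<in>A. mult a ` cl_ord_plus_sharp mult omega sharp A \<subset> cl_ord_plus_sharp mult omega sharp A)
       \<or> cl_ord_plus_sharp mult omega sharp (cl_omega_sharp mult omega sharp A)
           \<subset> cl_ord_plus_sharp mult omega sharp A
       \<or> (\<forall>x\<in>cl_ord_plus_sharp mult omega sharp A. \<forall>y\<in>cl_ord_plus_sharp mult omega sharp A.
            mult x y = y \<and> omega x = omega y)"
proof -
  from assms obtain pi where pi: "ordered_ordinal_product pi" "presents pi one mult omega"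
    unfolding ordinal_monoid_with_merge_def by blast
  interpret P: opres pi one mult omega
    using pi unfolding ordered_ordinal_product_def by unfold_locales auto
  have ax: "\<forall>a. sharp (idem_pow one mult a) = idem_pow one mult a"
    "\<forall>a. mult (sharp a) (sharp a) = sharp a"
    "\<forall>a b. sharp (mult a b) = mult a (mult (sharp (mult b a)) b)"
    using assms unfolding ordinal_monoid_with_merge_def by blast+
  interpret alg one mult omega sharp
  proof
    fix x y z :: 'a and k :: nat
    show "mult (mult x y) z = mult x (mult y z)" by (rule P.assoc)
    show "mult one x = x" by (rule P.lid)
    show "mult x one = x" by (rule P.rid)
    show "mult x (omega x) = omega x" by (rule P.om1)
    show "omega (mult x y) = mult x (omega (mult y x))" by (rule P.om2)
    show "0 < k \<Longrightarrow> omega (mpow one mult x k) = omega x" by (rule P.om3)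
    show "mult (sharp x) (sharp x) = sharp x" using ax by blast
    show "mult x x = x \<Longrightarrow> sharp x = x"
      using ax(1) idem_pow_idem[of mult one x] P.rid by metis
    have "sharp (mult x one) = mult x (mult (sharp (mult one x)) one)" using ax(3) by blast
    then show "mult x (sharp x) = sharp x" by (simp add: P.rid P.lid)
  qed
  show ?thesis by (rule main)
qed

end
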